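(* Let $p>0$, $k>0$ and $q=p\,e^{-2k^2}$ with $0<pq<1$, let $\zeta\in\mathbb R$, $t\in\mathbb C$, $x\in\mathbb R$. (a) If $p\,e^{-2\zeta k^2}<1$, then $$E^{(\zeta+1/2)}_{p,q}\big(te^{-kx}\big)e^{-x^2/2}=\frac1{\sqrt{2\pi}}\int_{-\infty}^{\infty}e^{ixy-y^2/2}E^{(\zeta)}_{p,q}\big(te^{iky}\big)\,dy.$$ (b) If $p\,e^{-(2\zeta-1)k^2}<1$, then $$E^{(\zeta-1/2)}_{p,q}\big(te^{ikx}\big)e^{-x^2/2}=\frac1{\sqrt{2\pi}}\int_{-\infty}^{\infty}e^{ixy-y^2/2}E^{(\zeta)}_{p,q}\big(te^{ky}\big)\,dy.$$
   Context: $[p,q;p,q]_n=\prod_{l=1}^n(p^{-l}-q^l)$ ($=1$ for $n=0$). The $(p,q,\zeta)$-exponential is $E^{(\zeta)}_{p,q}(z)=\sum_{n\ge0}\big(\frac qp\big)^{\zeta n^2/2}\frac{z^n}{[p,q;p,q]_n}$ (the case $\mu=\nu=\zeta/2$ of $E^{\mu,\nu}_{p,q}(z)=\sum_n(q^\mu/p^\nu)^{n^2}z^n/[p,q;p,q]_n$). *)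

theory Defs
  imports "HOL-Analysis.Analysis"
begin

definition pq_fact :: "real \<Rightarrow> real \<Rightarrow> nat \<Rightarrow> real" where
  "pq_fact p q n = (\<Prod>l\<in>{1..n}. inverse p ^ l - q ^ l)"

definition pq_exp :: "real \<Rightarrow> real \<Rightarrow> real \<Rightarrow> complex \<Rightarrow> complex" where
  "pq_exp p q \<zeta> z =
     (\<Sum>n. complex_of_real ((q / p) powr (\<zeta> * real n ^ 2 / 2) / pq_fact p q n) * z ^ n)"

end

theory Submission
  imports Defs "HOL-Probability.Probability"
begin

lemma exp_diff_of_real: "exp (A - complex_of_real r) = exp A * complex_of_real (exp (- r))"
  by (simp add: exp_diff exp_minus divide_inverse exp_of_real)

lemma gauss_eq: "(\<lambda>y::real. exp (- (y^2) / 2)) = (\<lambda>y. sqrt (2*pi) * std_normal_density y)"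
  by (rule ext) (simp add: std_normal_density_def)

lemma gauss_int: "integrable lborel (\<lambda>y::real. exp (- (y^2) / 2))"
proof -
  have "integrable lborel (\<lambda>y. sqrt (2*pi) * std_normal_density y)"
    by (intro integrable_mult_right integrable_normal_density) auto
  then show ?thesis unfolding gauss_eq .
qed

lemma gauss_integral: "(LBINT y::real. exp (- (y^2) / 2)) = sqrt (2*pi)"
  unfolding gauss_eq by (simp del: real_sqrt_mult)

lemma gauss_shift_real:
  fixes m :: real
  shows "integrable lborel (\<lambda>y. exp (- (y^2) / 2) * exp (m * y))"
    and "(LBINT y. exp (- (y^2) / 2) * exp (m * y)) = sqrt (2*pi) * exp (m^2 / 2)"
proof -
  let ?f = "\<lambda>y. exp (- (y^2) / 2) * exp (m * y)"
  have e: "?f (m + 1 * u) = exp (m^2/2) * exp (- (u^2) / 2)" for u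
  proof -
    have "?f (m + 1 * u) = exp (- ((m+u)^2) / 2 + m * (m + u))" by (simp only: exp_add mult_1_left)
    also have "- ((m+u)^2) / 2 + m * (m + u) = m^2/2 + (- (u^2) / 2)"
      by (simp add: power2_eq_square field_simps)
    finally show ?thesis by (simp only: exp_add)
  qed
  have i: "integrable lborel (\<lambda>u. ?f (m + 1 * u))"
    unfolding e by (intro integrable_mult_right gauss_int)
  then show "integrable lborel ?f"
    using lborel_integrable_real_affine_iff[of 1 ?f m] by simp
  have "(LBINT y. ?f y) = \<bar>1\<bar> *\<^sub>R (LBINT u. ?f (m + 1 * u))"
    by (rule lborel_integral_real_affine) simp
  also have "\<dots> = sqrt (2*pi) * exp (m^2 / 2)"
    unfolding e integral_mult_right_zero gauss_integral by simp
  finally show "(LBINT y. ?f y) = sqrt (2*pi) * exp (m^2 / 2)" .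
qed

lemma gauss_ft:
  fixes a :: real
  shows "integrable lborel (\<lambda>y. exp (\<i> * complex_of_real (a * y) - complex_of_real (y^2 / 2)))"
   and "(LBINT y. exp (\<i> * complex_of_real (a * y) - complex_of_real (y^2 / 2)))
        = complex_of_real (sqrt (2*pi) * exp (- (a^2) / 2))"
proof -
  have eq: "\<And>y. exp (\<i> * complex_of_real (a * y) - complex_of_real (y^2 / 2))
      = sqrt (2*pi) *\<^sub>R (std_normal_density y *\<^sub>R iexp (a * y))"
  proof -
    fix y :: real
    have "exp (\<i> * complex_of_real (a * y) - complex_of_real (y^2 / 2))
       = complex_of_real (exp (- (y^2) / 2)) * iexp (a * y)"
      unfolding exp_diff_of_real by (simp add: mult.commute)
    also have "\<dots> = sqrt (2*pi) *\<^sub>R (std_normal_density y *\<^sub>R iexp (a * y))"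
      by (simp add: std_normal_density_def scaleR_conv_of_real del: real_sqrt_mult)
    finally show "exp (\<i> * complex_of_real (a * y) - complex_of_real (y^2 / 2))
      = sqrt (2*pi) *\<^sub>R (std_normal_density y *\<^sub>R iexp (a * y))" .
  qed
  have "char std_normal_distribution a = complex_of_real (exp (- (a^2) / 2))"
    by (simp add: char_std_normal_distribution)
  then have c: "(LBINT y. std_normal_density y *\<^sub>R iexp (a * y)) = complex_of_real (exp (- (a^2) / 2))"
    unfolding char_def by (subst (asm) integral_density) auto
  have ii: "integrable lborel (\<lambda>y. std_normal_density y *\<^sub>R iexp (a * y))"
    by (rule Bochner_Integration.integrable_bound[OF integrable_normal_density[where \<mu>=0 and \<sigma>=1]]) auto
  show "integrable lborel (\<lambda>y. exp (\<i> * complex_of_real (a * y) - complex_of_real (y^2 / 2)))"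
    unfolding eq by (intro integrable_scaleR_right ii)
  show "(LBINT y. exp (\<i> * complex_of_real (a * y) - complex_of_real (y^2 / 2)))
        = complex_of_real (sqrt (2*pi) * exp (- (a^2) / 2))"
    unfolding eq integral_scaleR_right c by (simp add: scaleR_conv_of_real)
qed

lemma gauss_shift:
  fixes x m :: real
  shows "integrable lborel (\<lambda>y. exp (\<i> * complex_of_real (x * y) - complex_of_real (y^2 / 2)) * complex_of_real (exp (m * y)))"
    and "(LBINT y. exp (\<i> * complex_of_real (x * y) - complex_of_real (y^2 / 2)) * complex_of_real (exp (m * y)))
       = complex_of_real (sqrt (2*pi) * exp (m^2 / 2)) * exp (\<i> * complex_of_real (x * m)) * complex_of_real (exp (- (x^2) / 2))"
proof -
  let ?f = "\<lambda>y. exp (\<i> * complex_of_real (x * y) - complex_of_real (y^2 / 2)) * complex_of_real (exp (m * y))"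
  let ?c = "exp (\<i> * complex_of_real (x * m)) * complex_of_real (exp (m^2/2))"
  have e: "?f (m + 1 * u) = ?c * exp (\<i> * complex_of_real (x * u) - complex_of_real (u^2 / 2))" for u
  proof -
    have "?f (m + 1 * u) = exp (\<i> * complex_of_real (x * (m + u)) - complex_of_real ((m+u)^2 / 2) + complex_of_real (m * (m + u)))"
      by (simp only: exp_add of_real_exp mult_1)
    also have "\<dots> = exp (\<i> * complex_of_real (x * m) + complex_of_real (m^2/2) + (\<i> * complex_of_real (x * u) - complex_of_real (u^2 / 2)))"
      by (rule arg_cong[where f=exp]) (simp add: power2_eq_square field_simps)
    also have "\<dots> = ?c * exp (\<i> * complex_of_real (x * u) - complex_of_real (u^2 / 2))"
      by (simp only: exp_add of_real_exp)
    finally show ?thesis .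
  qed
  have i: "integrable lborel (\<lambda>u. ?f (m + 1 * u))"
    unfolding e by (intro integrable_mult_right gauss_ft(1))
  then show "integrable lborel ?f"
    using lborel_integrable_real_affine_iff[of 1 ?f m] by simp
  have "(LBINT y. ?f y) = \<bar>1\<bar> *\<^sub>R (LBINT u. ?f (m + 1 * u))"
    by (rule lborel_integral_real_affine) simp
  also have "\<dots> = ?c * complex_of_real (sqrt (2*pi) * exp (- (x^2) / 2))"
    unfolding e integral_mult_right_zero gauss_ft(2) by (simp only: scaleR_one abs_one)
  also have "\<dots> = complex_of_real (sqrt (2*pi) * exp (m^2 / 2)) * exp (\<i> * complex_of_real (x * m)) * complex_of_real (exp (- (x^2) / 2))"
    by (simp add: algebra_simps)
  finally show "(LBINT y. ?f y) = complex_of_real (sqrt (2*pi) * exp (m^2 / 2)) * exp (\<i> * complex_of_real (x * m)) * complex_of_real (exp (- (x^2) / 2))" .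
qed
definition AA :: "real \<Rightarrow> real \<Rightarrow> real \<Rightarrow> real \<Rightarrow> nat \<Rightarrow> real" where
  "AA p q k \<mu> n = exp (- \<mu> * k^2 * real n ^ 2) / pq_fact p q n"

context
  fixes p q k :: real
  assumes p: "p > 0" and q: "q = p * exp (- 2 * k^2)" and pq1: "p * q < 1"
begin

lemma qpos: "q > 0" using p q by simp

lemma q_lt: "q < inverse p"
  using pq1 p by (simp add: field_simps mult.commute)

lemma fact_term_pos: "l > 0 \<Longrightarrow> inverse p ^ l - q ^ l > 0"
  using power_strict_mono[OF q_lt, of l] qpos by simp

lemma fact_pos: "pq_fact p q n > 0"
  unfolding pq_fact_def
proof (rule prod_pos)
  fix l assume "l \<in> {1..n}"
  then show "0 < inverse p ^ l - q ^ l" by (intro fact_term_pos) auto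
qed

lemma fact_Suc: "pq_fact p q (Suc n) = pq_fact p q n * (inverse p ^ Suc n - q ^ Suc n)"
  unfolding pq_fact_def by (subst prod.nat_ivl_Suc') auto

lemma AA_pos: "AA p q k \<mu> n > 0"
  unfolding AA_def using fact_pos by simp


lemma powr_eq: "(q / p) powr (\<mu> * real n ^ 2 / 2) = exp (- \<mu> * k^2 * real n ^ 2)"
proof -
  have "q / p = exp (- 2 * k^2)" using p q by simp
  then show ?thesis by (simp add: powr_def)
qed

lemma pq_exp_eq: "pq_exp p q \<mu> z = (\<Sum>n. complex_of_real (AA p q k \<mu> n) * z ^ n)"
  unfolding pq_exp_def AA_def powr_eq ..

lemma norm_term: "norm (complex_of_real (AA p q k \<mu> n) * z ^ n) = AA p q k \<mu> n * norm z ^ n"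
  using AA_pos[of \<mu> n] by (simp add: norm_mult norm_power)

lemma AA_summable:
  assumes s: "p * exp (- 2 * \<mu> * k^2) < 1" and r: "r \<ge> 0"
  shows "summable (\<lambda>n. AA p q k \<mu> n * r ^ n)"
proof -
  define s where "s = p * exp (- 2 * \<mu> * k^2)"
  define C where "C = r * exp (- \<mu> * k^2) * p / (1 - p * q)"
  define \<rho> where "\<rho> n = r * exp (- \<mu> * k^2 * (2 * real n + 1)) / (inverse p ^ Suc n - q ^ Suc n)" for n
  have s0: "s \<ge> 0" "s < 1" using s p by (auto simp: s_def)
  have pq0: "0 < 1 - p * q" using pq1 by simp
  have step: "AA p q k \<mu> (Suc n) * r ^ Suc n = (AA p q k \<mu> n * r ^ n) * \<rho> n" for n
  proof -
    have e: "exp (- \<mu> * k^2 * real (Suc n) ^ 2) = exp (- \<mu> * k^2 * real n ^ 2) * exp (- \<mu> * k^2 * (2 * real n + 1))"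
      by (simp add: exp_add[symmetric] power2_eq_square algebra_simps)
    show ?thesis
      unfolding AA_def \<rho>_def e fact_Suc using fact_pos[of n] fact_term_pos[of "Suc n"]
      by (simp add: field_simps)
  qed
  have rho_le: "\<rho> n \<le> C * s ^ n" for n
  proof -
    have d: "inverse p ^ Suc n - q ^ Suc n = inverse p ^ Suc n * (1 - (p*q) ^ Suc n)"
      using p by (simp add: power_mult_distrib field_simps)
    have pqn: "(p*q) ^ Suc n \<le> p * q"
    proof -
      have "(p*q) ^ n \<le> 1" using pq1 p qpos by (intro power_le_one) auto
      then show ?thesis using p qpos by (simp add: mult_left_le)
    qed
    have ip: "inverse p ^ Suc n > 0" using p by simp
    have D: "inverse p ^ Suc n - q ^ Suc n \<ge> inverse p ^ Suc n * (1 - p*q)"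
      unfolding d using pqn ip by (intro mult_left_mono) auto
    have D0: "inverse p ^ Suc n * (1 - p*q) > 0" using ip pq0 by simp
    have E: "exp (- \<mu> * k^2 * (2 * real n + 1)) = exp (- \<mu> * k^2) * exp (- 2 * \<mu> * k^2) ^ n"
      by (simp add: exp_of_nat_mult[symmetric] exp_add[symmetric] algebra_simps)
    have "\<rho> n \<le> r * exp (- \<mu> * k^2 * (2 * real n + 1)) / (inverse p ^ Suc n * (1 - p*q))"
      unfolding \<rho>_def using D D0 r by (intro divide_left_mono) auto
    also have "\<dots> = C * s ^ n"
      unfolding E C_def s_def using p pq0 by (simp add: field_simps power_mult_distrib)
    finally show ?thesis .
  qed
  have "(\<lambda>n. C * s ^ n) \<longlonglongrightarrow> C * 0"
    using s0 by (intro tendsto_mult tendsto_const LIMSEQ_power_zero) auto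
  then have "eventually (\<lambda>n. C * s ^ n < 1/2) sequentially"
    by (intro order_tendstoD(2)) auto
  then obtain N where N: "\<And>n. n \<ge> N \<Longrightarrow> C * s ^ n < 1/2"
    unfolding eventually_sequentially by blast
  have rho0: "\<rho> n \<ge> 0" for n
    unfolding \<rho>_def using r fact_term_pos[of "Suc n"] by simp
  have A0: "AA p q k \<mu> n * r ^ n \<ge> 0" for n using AA_pos[of \<mu> n] r by simp
  show ?thesis
  proof (rule summable_ratio_test[where c="1/2" and N=N])
    fix n assume "n \<ge> N"
    then have "\<rho> n \<le> 1/2" using N[of n] rho_le[of n] by simp
    then show "norm (AA p q k \<mu> (Suc n) * r ^ Suc n) \<le> 1/2 * norm (AA p q k \<mu> n * r ^ n)"
    proof -
      have "norm (AA p q k \<mu> (Suc n) * r ^ Suc n) = (AA p q k \<mu> n * r ^ n) * \<rho> n"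
        unfolding step using A0[of n] rho0[of n] by simp
      also have "\<dots> \<le> (AA p q k \<mu> n * r ^ n) * (1/2)"
        using A0[of n] \<open>\<rho> n \<le> 1/2\<close> by (intro mult_left_mono) auto
      also have "\<dots> = 1/2 * norm (AA p q k \<mu> n * r ^ n)" using A0[of n] by simp
      finally show ?thesis .
    qed
  qed simp
qed

lemma partA:
  fixes \<zeta> x :: real and t :: complex
  assumes hs: "p * exp (- 2 * \<zeta> * k^2) < 1"
  shows "pq_exp p q (\<zeta> + 1/2) (t * complex_of_real (exp (- k * x))) * complex_of_real (exp (- (x^2) / 2))
            = complex_of_real (1 / sqrt (2 * pi)) *
              (LBINT y. exp (\<i> * complex_of_real (x * y) - complex_of_real (y^2 / 2))
                        * pq_exp p q \<zeta> (t * exp (\<i> * complex_of_real (k * y))))"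
proof -
  define f where "f n y = complex_of_real (AA p q k \<zeta> n) * t ^ n *
      exp (\<i> * complex_of_real ((x + k * real n) * y) - complex_of_real (y^2 / 2))" for n y
  have fint: "integrable lborel (f n)" for n
    unfolding f_def by (intro integrable_mult_right gauss_ft(1))
  have fI: "integral\<^sup>L lborel (f n) = complex_of_real (AA p q k \<zeta> n) * t ^ n *
      complex_of_real (sqrt (2*pi) * exp (- ((x + k * real n)^2) / 2))" for n
    unfolding f_def integral_mult_right_zero gauss_ft(2) ..
  have fnorm0: "norm (f n y) = (AA p q k \<zeta> n * norm t ^ n) * exp (- (y^2) / 2)" for n y
    using AA_pos[of \<zeta> n] by (simp add: f_def norm_mult norm_power norm_exp_eq_Re)
  have fnorm: "(\<lambda>y. norm (f n y)) = (\<lambda>y. (AA p q k \<zeta> n * norm t ^ n) * exp (- (y^2) / 2))" for n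
    by (rule ext) (rule fnorm0)
  have summ1: "summable (\<lambda>n. AA p q k \<zeta> n * norm t ^ n)"
    by (rule AA_summable[OF hs]) simp
  have AE: "AE y in lborel. summable (\<lambda>n. norm (f n y))"
  proof (rule AE_I2)
    fix y show "summable (\<lambda>n. norm (f n y))"
      unfolding fnorm0 by (rule summable_mult2[OF summ1])
  qed
  have sI: "summable (\<lambda>n. LBINT y. norm (f n y))"
    unfolding fnorm integral_mult_right_zero by (intro summable_mult2 summ1)
  have key: "(LBINT y. (\<Sum>n. f n y)) = (\<Sum>n. integral\<^sup>L lborel (f n))"
    by (rule integral_suminf[OF fint AE sI])
  have sumI: "summable (\<lambda>n. integral\<^sup>L lborel (f n))"
    by (rule summable_integral[OF fint AE sI])
  have pt: "exp (\<i> * complex_of_real (x * y) - complex_of_real (y^2 / 2))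
        * pq_exp p q \<zeta> (t * exp (\<i> * complex_of_real (k * y))) = (\<Sum>n. f n y)" for y
  proof -
    let ?g = "\<lambda>n. complex_of_real (AA p q k \<zeta> n) * (t * exp (\<i> * complex_of_real (k * y))) ^ n"
    have "summable (\<lambda>n. norm (?g n))"
      unfolding norm_term using summ1 by (simp add: norm_mult)
    then have sg: "summable ?g" by (rule summable_norm_cancel)
    have "exp (\<i> * complex_of_real (x * y) - complex_of_real (y^2 / 2)) * (\<Sum>n. ?g n)
       = (\<Sum>n. exp (\<i> * complex_of_real (x * y) - complex_of_real (y^2 / 2)) * ?g n)"
      by (rule suminf_mult[OF sg, symmetric])
    also have "\<dots> = (\<Sum>n. f n y)"
    proof (rule suminf_cong)
      fix n
      have "exp (\<i> * complex_of_real (x * y) - complex_of_real (y^2 / 2)) * exp (\<i> * complex_of_real (k * y)) ^ n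
          = exp (\<i> * complex_of_real ((x + k * real n) * y) - complex_of_real (y^2 / 2))"
        by (simp add: exp_of_nat_mult[symmetric] exp_add[symmetric] algebra_simps)
      then show "exp (\<i> * complex_of_real (x * y) - complex_of_real (y^2 / 2)) * ?g n = f n y"
        unfolding f_def by (simp add: power_mult_distrib mult_ac)
    qed
    finally show ?thesis unfolding pq_exp_eq .
  qed
  have summL: "summable (\<lambda>n. complex_of_real (AA p q k (\<zeta> + 1/2) n) * (t * complex_of_real (exp (- k * x))) ^ n)"
  proof (rule summable_norm_cancel)
    have "p * exp (- 2 * (\<zeta> + 1/2) * k^2) \<le> p * exp (- 2 * \<zeta> * k^2)"
      using p by (intro mult_left_mono) (auto simp: algebra_simps)
    then show "summable (\<lambda>n. norm (complex_of_real (AA p q k (\<zeta> + 1/2) n) * (t * complex_of_real (exp (- k * x))) ^ n))"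
      unfolding norm_term using hs by (intro AA_summable) auto
  qed
  have termeq: "complex_of_real (AA p q k (\<zeta> + 1/2) n) * (t * complex_of_real (exp (- k * x))) ^ n * complex_of_real (exp (- (x^2) / 2))
     = complex_of_real (1 / sqrt (2 * pi)) * integral\<^sup>L lborel (f n)" for n
  proof -
    have e: "exp (- (\<zeta> + 1/2) * k^2 * real n ^ 2) * exp (- k * x) ^ n * exp (- (x^2) / 2)
        = exp (- \<zeta> * k^2 * real n ^ 2) * exp (- ((x + k * real n)^2) / 2)"
      by (simp add: exp_of_nat_mult[symmetric] exp_add[symmetric] power2_eq_square field_simps)
    have r: "AA p q k (\<zeta> + 1/2) n * exp (- k * x) ^ n * exp (- (x^2) / 2)
        = 1 / sqrt (2 * pi) * (AA p q k \<zeta> n * (sqrt (2*pi) * exp (- ((x + k * real n)^2) / 2)))"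
      using e unfolding AA_def by (simp add: field_simps)
    have "complex_of_real (AA p q k (\<zeta> + 1/2) n) * (t * complex_of_real (exp (- k * x))) ^ n * complex_of_real (exp (- (x^2) / 2))
        = t ^ n * complex_of_real (AA p q k (\<zeta> + 1/2) n * exp (- k * x) ^ n * exp (- (x^2) / 2))"
      by (simp add: power_mult_distrib mult_ac)
    also have "\<dots> = t ^ n * complex_of_real (1 / sqrt (2 * pi) * (AA p q k \<zeta> n * (sqrt (2*pi) * exp (- ((x + k * real n)^2) / 2))))"
      unfolding r ..
    also have "\<dots> = complex_of_real (1 / sqrt (2 * pi)) * integral\<^sup>L lborel (f n)"
      unfolding fI by (simp only: of_real_mult mult_ac)
    finally show ?thesis .
  qed
  have "pq_exp p q (\<zeta> + 1/2) (t * complex_of_real (exp (- k * x))) * complex_of_real (exp (- (x^2) / 2))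
     = (\<Sum>n. complex_of_real (AA p q k (\<zeta> + 1/2) n) * (t * complex_of_real (exp (- k * x))) ^ n * complex_of_real (exp (- (x^2) / 2)))"
    unfolding pq_exp_eq by (rule suminf_mult2[OF summL])
  also have "\<dots> = (\<Sum>n. complex_of_real (1 / sqrt (2 * pi)) * integral\<^sup>L lborel (f n))"
    unfolding termeq ..
  also have "\<dots> = complex_of_real (1 / sqrt (2 * pi)) * (\<Sum>n. integral\<^sup>L lborel (f n))"
    by (rule suminf_mult[OF sumI])
  also have "\<dots> = complex_of_real (1 / sqrt (2 * pi)) *
              (LBINT y. exp (\<i> * complex_of_real (x * y) - complex_of_real (y^2 / 2))
                        * pq_exp p q \<zeta> (t * exp (\<i> * complex_of_real (k * y))))"
    unfolding pt key ..
  finally show ?thesis .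
qed

lemma partB:
  fixes \<zeta> x :: real and t :: complex
  assumes hs: "p * exp (- (2 * \<zeta> - 1) * k^2) < 1"
  shows "pq_exp p q (\<zeta> - 1/2) (t * exp (\<i> * complex_of_real (k * x))) * complex_of_real (exp (- (x^2) / 2))
            = complex_of_real (1 / sqrt (2 * pi)) *
              (LBINT y. exp (\<i> * complex_of_real (x * y) - complex_of_real (y^2 / 2))
                        * pq_exp p q \<zeta> (t * complex_of_real (exp (k * y))))"
proof -
  define f where "f n y = complex_of_real (AA p q k \<zeta> n) * t ^ n *
      (exp (\<i> * complex_of_real (x * y) - complex_of_real (y^2 / 2)) * complex_of_real (exp ((k * real n) * y)))" for n y
  have fint: "integrable lborel (f n)" for n
    unfolding f_def by (intro integrable_mult_right gauss_shift(1))
  have fI: "integral\<^sup>L lborel (f n) = complex_of_real (AA p q k \<zeta> n) * t ^ n *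
      (complex_of_real (sqrt (2*pi) * exp ((k * real n)^2 / 2)) * exp (\<i> * complex_of_real (x * (k * real n))) * complex_of_real (exp (- (x^2) / 2)))" for n
    unfolding f_def integral_mult_right_zero gauss_shift(2) ..
  have fnorm0: "norm (f n y) = (AA p q k \<zeta> n * norm t ^ n) * (exp (- (y^2) / 2) * exp ((k * real n) * y))" for n y
    using AA_pos[of \<zeta> n] by (simp add: f_def norm_mult norm_power norm_exp_eq_Re)
  have fnorm: "(\<lambda>y. norm (f n y)) = (\<lambda>y. (AA p q k \<zeta> n * norm t ^ n) * (exp (- (y^2) / 2) * exp ((k * real n) * y)))" for n
    by (rule ext) (rule fnorm0)
  have hs0: "p * exp (- 2 * \<zeta> * k^2) < 1"
  proof -
    have "p * exp (- 2 * \<zeta> * k^2) \<le> p * exp (- (2 * \<zeta> - 1) * k^2)"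
      using p by (intro mult_left_mono) (auto simp: algebra_simps)
    then show ?thesis using hs by linarith
  qed
  have hs1: "p * exp (- 2 * (\<zeta> - 1/2) * k^2) < 1"
  proof -
    have "- 2 * (\<zeta> - 1/2) * k^2 = - (2 * \<zeta> - 1) * k^2" by (simp add: algebra_simps)
    then show ?thesis using hs by simp
  qed
  have AE: "AE y in lborel. summable (\<lambda>n. norm (f n y))"
  proof (rule AE_I2)
    fix y
    have s: "summable (\<lambda>n. AA p q k \<zeta> n * (norm t * exp (k * y)) ^ n)"
      by (rule AA_summable[OF hs0]) simp
    have e: "(AA p q k \<zeta> n * norm t ^ n) * (exp (- (y^2) / 2) * exp ((k * real n) * y))
        = exp (- (y^2) / 2) * (AA p q k \<zeta> n * (norm t * exp (k * y)) ^ n)" for n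
    proof -
      have "exp ((k * real n) * y) = exp (k * y) ^ n"
        by (simp add: exp_of_nat_mult[symmetric] mult_ac)
      then show ?thesis by (simp add: power_mult_distrib mult_ac)
    qed
    show "summable (\<lambda>n. norm (f n y))"
      unfolding fnorm0 e by (rule summable_mult[OF s])
  qed
  have sI: "summable (\<lambda>n. LBINT y. norm (f n y))"
  proof -
    have s: "summable (\<lambda>n. AA p q k (\<zeta> - 1/2) n * norm t ^ n)"
      by (rule AA_summable[OF hs1]) simp
    have e: "AA p q k \<zeta> n * exp ((k * real n)^2 / 2) = AA p q k (\<zeta> - 1/2) n" for n
    proof -
      have "exp (- \<zeta> * k^2 * real n ^ 2) * exp ((k * real n)^2 / 2) = exp (- (\<zeta> - 1/2) * k^2 * real n ^ 2)"
        by (simp add: exp_add[symmetric] power_mult_distrib algebra_simps)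
      then show ?thesis unfolding AA_def by simp
    qed
    have "(LBINT y. norm (f n y)) = sqrt (2*pi) * (AA p q k (\<zeta> - 1/2) n * norm t ^ n)" for n
      unfolding fnorm integral_mult_right_zero gauss_shift_real(2) e[symmetric] by (simp only: mult_ac)
    then show ?thesis using summable_mult[OF s, of "sqrt (2*pi)"] by simp
  qed
  have key: "(LBINT y. (\<Sum>n. f n y)) = (\<Sum>n. integral\<^sup>L lborel (f n))"
    by (rule integral_suminf[OF fint AE sI])
  have sumI: "summable (\<lambda>n. integral\<^sup>L lborel (f n))"
    by (rule summable_integral[OF fint AE sI])
  have pt: "exp (\<i> * complex_of_real (x * y) - complex_of_real (y^2 / 2))
        * pq_exp p q \<zeta> (t * complex_of_real (exp (k * y))) = (\<Sum>n. f n y)" for y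
  proof -
    let ?g = "\<lambda>n. complex_of_real (AA p q k \<zeta> n) * (t * complex_of_real (exp (k * y))) ^ n"
    have "summable (\<lambda>n. norm (?g n))"
      unfolding norm_term by (rule AA_summable[OF hs0]) simp
    then have sg: "summable ?g" by (rule summable_norm_cancel)
    have "exp (\<i> * complex_of_real (x * y) - complex_of_real (y^2 / 2)) * (\<Sum>n. ?g n)
       = (\<Sum>n. exp (\<i> * complex_of_real (x * y) - complex_of_real (y^2 / 2)) * ?g n)"
      by (rule suminf_mult[OF sg, symmetric])
    also have "\<dots> = (\<Sum>n. f n y)"
    proof (rule suminf_cong)
      fix n
      have "complex_of_real (exp (k * y)) ^ n = complex_of_real (exp ((k * real n) * y))"
        by (simp add: exp_of_nat_mult[symmetric] mult_ac del: of_real_power add: of_real_power[symmetric])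
      then show "exp (\<i> * complex_of_real (x * y) - complex_of_real (y^2 / 2)) * ?g n = f n y"
        unfolding f_def power_mult_distrib by (simp only: mult_ac)
    qed
    finally show ?thesis unfolding pq_exp_eq .
  qed
  have summL: "summable (\<lambda>n. complex_of_real (AA p q k (\<zeta> - 1/2) n) * (t * exp (\<i> * complex_of_real (k * x))) ^ n)"
  proof (rule summable_norm_cancel)
    show "summable (\<lambda>n. norm (complex_of_real (AA p q k (\<zeta> - 1/2) n) * (t * exp (\<i> * complex_of_real (k * x))) ^ n))"
      unfolding norm_term by (rule AA_summable[OF hs1]) simp
  qed
  have termeq: "complex_of_real (AA p q k (\<zeta> - 1/2) n) * (t * exp (\<i> * complex_of_real (k * x))) ^ n * complex_of_real (exp (- (x^2) / 2))
     = complex_of_real (1 / sqrt (2 * pi)) * integral\<^sup>L lborel (f n)" for n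
  proof -
    have e: "exp (- \<zeta> * k^2 * real n ^ 2) * exp ((k * real n)^2 / 2) = exp (- (\<zeta> - 1/2) * k^2 * real n ^ 2)"
      by (simp add: exp_add[symmetric] power_mult_distrib algebra_simps)
    have r: "AA p q k (\<zeta> - 1/2) n = 1 / sqrt (2 * pi) * (AA p q k \<zeta> n * (sqrt (2*pi) * exp ((k * real n)^2 / 2)))"
      using e[symmetric] unfolding AA_def by simp
    have ei: "exp (\<i> * complex_of_real (k * x)) ^ n = exp (\<i> * complex_of_real (x * (k * real n)))"
      by (simp add: exp_of_nat_mult[symmetric] mult_ac)
    show ?thesis
      unfolding fI r ei power_mult_distrib by (simp only: of_real_mult mult_ac)
  qed
  have "pq_exp p q (\<zeta> - 1/2) (t * exp (\<i> * complex_of_real (k * x))) * complex_of_real (exp (- (x^2) / 2))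
     = (\<Sum>n. complex_of_real (AA p q k (\<zeta> - 1/2) n) * (t * exp (\<i> * complex_of_real (k * x))) ^ n * complex_of_real (exp (- (x^2) / 2)))"
    unfolding pq_exp_eq by (rule suminf_mult2[OF summL])
  also have "\<dots> = (\<Sum>n. complex_of_real (1 / sqrt (2 * pi)) * integral\<^sup>L lborel (f n))"
    unfolding termeq ..
  also have "\<dots> = complex_of_real (1 / sqrt (2 * pi)) * (\<Sum>n. integral\<^sup>L lborel (f n))"
    by (rule suminf_mult[OF sumI])
  also have "\<dots> = complex_of_real (1 / sqrt (2 * pi)) *
              (LBINT y. exp (\<i> * complex_of_real (x * y) - complex_of_real (y^2 / 2))
                        * pq_exp p q \<zeta> (t * complex_of_real (exp (k * y))))"
    unfolding pt key ..
  finally show ?thesis .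
qed

end

theorem mainTheorem6:
  fixes p k q \<zeta> x :: real and t :: complex
  assumes "p > 0" and "k > 0" and "q = p * exp (- 2 * k^2)"
    and "0 < p * q" and "p * q < 1"
  shows "(p * exp (- 2 * \<zeta> * k^2) < 1 \<longrightarrow>
            pq_exp p q (\<zeta> + 1/2) (t * complex_of_real (exp (- k * x))) * complex_of_real (exp (- (x^2) / 2))
            = complex_of_real (1 / sqrt (2 * pi)) *
              (LBINT y. exp (\<i> * complex_of_real (x * y) - complex_of_real (y^2 / 2))
                        * pq_exp p q \<zeta> (t * exp (\<i> * complex_of_real (k * y)))))
       \<and> (p * exp (- (2 * \<zeta> - 1) * k^2) < 1 \<longrightarrow>
            pq_exp p q (\<zeta> - 1/2) (t * exp (\<i> * complex_of_real (k * x))) * complex_of_real (exp (- (x^2) / 2))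
            = complex_of_real (1 / sqrt (2 * pi)) *
              (LBINT y. exp (\<i> * complex_of_real (x * y) - complex_of_real (y^2 / 2))
                        * pq_exp p q \<zeta> (t * complex_of_real (exp (k * y)))))"
proof (intro conjI impI)
  assume h: "p * exp (- 2 * \<zeta> * k^2) < 1"
  show "pq_exp p q (\<zeta> + 1/2) (t * complex_of_real (exp (- k * x))) * complex_of_real (exp (- (x^2) / 2))
            = complex_of_real (1 / sqrt (2 * pi)) *
              (LBINT y. exp (\<i> * complex_of_real (x * y) - complex_of_real (y^2 / 2))
                        * pq_exp p q \<zeta> (t * exp (\<i> * complex_of_real (k * y))))"
    by (rule partA[OF assms(1) assms(3) assms(5) h])
next
  assume h: "p * exp (- (2 * \<zeta> - 1) * k^2) < 1"
  show "pq_exp p q (\<zeta> - 1/2) (t * exp (\<i> * complex_of_real (k * x))) * complex_of_real (exp (- (x^2) / 2))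
            = complex_of_real (1 / sqrt (2 * pi)) *
              (LBINT y. exp (\<i> * complex_of_real (x * y) - complex_of_real (y^2 / 2))
                        * pq_exp p q \<zeta> (t * complex_of_real (exp (k * y))))"
    by (rule partB[OF assms(1) assms(3) assms(5) h])
qed

end
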